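(* A graph $G$ is degree-perfect if and only if $G$ has no induced subgraph isomorphic to a cycle of length other than $4$ (equivalently, $G$ is bipartite and every induced cycle of $G$ is a $4$-cycle).
   Context: All graphs are finite and simple. The biclique number $\tau(H)$ is the largest $t$ such that $H$ has a (not necessarily induced) subgraph isomorphic to $K_{t,t}$, and $\delta(H)$ is the minimum degree. A graph $G$ is degree-perfect if every induced subgraph $H$ of $G$ (with at least one vertex) satisfies $\delta(H)\le \tau(H)$. (It may be used that, by a theorem of Golumbic and Goss, every bipartite graph with at least one edge whose only induced cycles are $4$-cycles has a simplicial edge, i.e. an edge $uv$ such that every vertex of $N(u)$ is adjacent to every vertex of $N(v)$.) *)

theory Defs
  imports Main
begin

text \<open>A finite simple graph: finite vertex set V and a symmetric irreflexive
adjacency relation E (only its restriction to V matters).\<close>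

definition simple_graph :: "'a set \<Rightarrow> ('a \<Rightarrow> 'a \<Rightarrow> bool) \<Rightarrow> bool" where
  "simple_graph V E \<longleftrightarrow> finite V \<and> (\<forall>u v. E u v \<longrightarrow> E v u) \<and> (\<forall>v. \<not> E v v)"

definition ideg :: "('a \<Rightarrow> 'a \<Rightarrow> bool) \<Rightarrow> 'a set \<Rightarrow> 'a \<Rightarrow> nat" where
  "ideg E S v = card {u \<in> S. E v u}"

definition min_degree :: "('a \<Rightarrow> 'a \<Rightarrow> bool) \<Rightarrow> 'a set \<Rightarrow> nat" where
  "min_degree E S = Min (ideg E S ` S)"

definition has_biclique :: "('a \<Rightarrow> 'a \<Rightarrow> bool) \<Rightarrow> 'a set \<Rightarrow> nat \<Rightarrow> bool" where
  "has_biclique E S t \<longleftrightarrow> (\<exists>A B. A \<subseteq> S \<and> B \<subseteq> S \<and> A \<inter> B = {} \<and>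
      card A = t \<and> card B = t \<and> finite A \<and> finite B \<and> (\<forall>a\<in>A. \<forall>b\<in>B. E a b))"

definition biclique_number :: "('a \<Rightarrow> 'a \<Rightarrow> bool) \<Rightarrow> 'a set \<Rightarrow> nat" where
  "biclique_number E S = (GREATEST t. has_biclique E S t)"

definition degree_perfect :: "'a set \<Rightarrow> ('a \<Rightarrow> 'a \<Rightarrow> bool) \<Rightarrow> bool" where
  "degree_perfect V E \<longleftrightarrow>
     (\<forall>S. S \<subseteq> V \<and> S \<noteq> {} \<longrightarrow> min_degree E S \<le> biclique_number E S)"

definition has_induced_cycle :: "'a set \<Rightarrow> ('a \<Rightarrow> 'a \<Rightarrow> bool) \<Rightarrow> nat \<Rightarrow> bool" where
  "has_induced_cycle V E k \<longleftrightarrow> 3 \<le> k \<and> (\<exists>f. inj_on f {0..<k} \<and> f ` {0..<k} \<subseteq> V \<and>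
     (\<forall>i<k. \<forall>j<k. E (f i) (f j) \<longleftrightarrow> (j = Suc i mod k \<or> i = Suc j mod k)))"

end

theory Submission imports Defs begin

definition ipath :: "('a \<Rightarrow> 'a \<Rightarrow> bool) \<Rightarrow> 'a list \<Rightarrow> bool" where
"ipath E xs \<longleftrightarrow> distinct xs \<and> (\<forall>i<length xs. \<forall>j<length xs. E (xs!i) (xs!j) \<longleftrightarrow> (j = Suc i \<or> i = Suc j))"

lemma ipath_single: "\<not> E a a \<Longrightarrow> ipath E [a]"
  by (simp add: ipath_def)

lemma ipath_Cons:
  assumes sym: "\<And>u v. E u v \<Longrightarrow> E v u" and irr: "\<not> E a a"
    and p: "ipath E xs" and ne: "xs \<noteq> []" and nin: "a \<notin> set xs"
    and h: "E a (hd xs)" and t: "\<forall>z\<in>set (tl xs). \<not> E a z"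
  shows "ipath E (a # xs)"
proof -
  have d: "distinct (a # xs)" using p nin by (simp add: ipath_def)
  have key: "E a (xs!j) \<longleftrightarrow> j = 0" if "j < length xs" for j
  proof (cases j)
    case 0 then show ?thesis using h ne by (simp add: hd_conv_nth)
  next
    case (Suc j')
    then have "xs ! j \<in> set (tl xs)" using that
      by (metis Suc_less_eq length_Cons list.exhaust_sel ne nth_Cons_Suc nth_mem length_tl diff_Suc_1)
    then show ?thesis using t Suc by auto
  qed
  have "\<forall>i<length (a#xs). \<forall>j<length (a#xs). E ((a#xs)!i) ((a#xs)!j) \<longleftrightarrow> (j = Suc i \<or> i = Suc j)"
  proof (intro allI impI)
    fix i j assume i: "i < length (a#xs)" and j: "j < length (a#xs)"
    show "E ((a#xs)!i) ((a#xs)!j) \<longleftrightarrow> (j = Suc i \<or> i = Suc j)"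
    proof (cases i)
      case 0
      then show ?thesis
      proof (cases j)
        case 0 then show ?thesis using \<open>i=0\<close> irr by simp
      next
        case (Suc j') then show ?thesis using \<open>i=0\<close> key[of j'] j by auto
      qed
    next
      case (Suc i')
      then show ?thesis
      proof (cases j)
        case 0 then show ?thesis using \<open>i=Suc i'\<close> key[of i'] i sym by auto
      next
        case (Suc j') then show ?thesis using \<open>i=Suc i'\<close> p i j by (auto simp: ipath_def)
      qed
    qed
  qed
  then show ?thesis using d by (simp add: ipath_def)
qed

lemma ipath_rev:
  assumes sym: "\<And>u v. E u v \<Longrightarrow> E v u" and p: "ipath E xs"
  shows "ipath E (rev xs)"
proof -
  have "E (rev xs ! i) (rev xs ! j) \<longleftrightarrow> (j = Suc i \<or> i = Suc j)"
    if "i < length xs" "j < length xs" for i j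
  proof -
    have "E (rev xs ! i) (rev xs ! j) = E (xs ! (length xs - Suc i)) (xs ! (length xs - Suc j))"
      using that by (simp add: rev_nth)
    also have "\<dots> \<longleftrightarrow> (length xs - Suc j = Suc (length xs - Suc i) \<or> length xs - Suc i = Suc (length xs - Suc j))"
      using p that by (simp add: ipath_def)
    also have "\<dots> \<longleftrightarrow> (j = Suc i \<or> i = Suc j)" using that by arith
    finally show ?thesis .
  qed
  then show ?thesis using p by (simp add: ipath_def)
qed

lemma tl_rev': "tl (rev xs) = rev (butlast xs)"
  by (metis butlast_rev rev_rev_ident)

lemma ipath_snoc:
  assumes sym: "\<And>u v. E u v \<Longrightarrow> E v u" and irr: "\<not> E b b"
    and p: "ipath E xs" and ne: "xs \<noteq> []" and nin: "b \<notin> set xs"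
    and h: "E (last xs) b" and t: "\<forall>z\<in>set (butlast xs). \<not> E z b"
  shows "ipath E (xs @ [b])"
proof -
  have "ipath E (b # rev xs)"
    apply (rule ipath_Cons)
    using sym irr ipath_rev[OF sym p] ne nin h t
    by (auto simp: hd_rev tl_rev' intro: sym)
  then have "ipath E (rev (b # rev xs))" using ipath_rev[of E "b # rev xs"] sym by blast
  then show ?thesis by simp
qed

lemma Suc_mod_lt: "i < k \<Longrightarrow> Suc i mod k = (if Suc i = k then 0 else Suc i)"
  by (simp add: mod_Suc)

lemma ipath_cycle:
  assumes sym: "\<And>u v. E u v \<Longrightarrow> E v u" and irr: "\<And>v. \<not> E v v"
    and p: "ipath E r" and len: "2 \<le> length r" and nin: "a \<notin> set r"
    and V: "set r \<subseteq> V" "a \<in> V"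
    and h: "E a (hd r)" and l: "E a (last r)" and m: "\<forall>z\<in>set (butlast (tl r)). \<not> E a z"
  shows "has_induced_cycle V E (Suc (length r))"
proof -
  define n where "n = length r"
  define k where "k = Suc n"
  have k3: "3 \<le> k" using len by (simp add: k_def n_def)
  have key: "E a (r!j) \<longleftrightarrow> (j = 0 \<or> j = n - 1)" if "j < n" for j
  proof -
    have r0: "r ! 0 = hd r" using len by (cases r) auto
    have "r \<noteq> []" using len by auto
    then have rl: "r ! (n-1) = last r" by (simp add: last_conv_nth n_def)
    show ?thesis
    proof (cases "j = 0 \<or> j = n - 1")
      case True then show ?thesis using r0 rl h l by auto
    next
      case False
      then have "0 < j" "j < n - 1" using that by auto
      then have "r ! j = butlast (tl r) ! (j - 1)"
        by (simp add: nth_butlast nth_tl n_def)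
      moreover have "j - 1 < length (butlast (tl r))" using \<open>0<j\<close> \<open>j < n-1\<close> by (simp add: n_def)
      ultimately have "r ! j \<in> set (butlast (tl r))" by simp
      then show ?thesis using m False by auto
    qed
  qed
  have dist: "distinct (a # r)" using p nin by (simp add: ipath_def)
  have inj: "inj_on (\<lambda>i. (a#r)!i) {0..<k}"
    using dist by (auto simp: inj_on_def k_def n_def nth_eq_iff_index_eq)
  have img: "(\<lambda>i. (a#r)!i) ` {0..<k} \<subseteq> V"
  proof
    fix x assume "x \<in> (\<lambda>i. (a#r)!i) ` {0..<k}"
    then obtain i where "i < k" "x = (a#r)!i" by auto
    then have "x \<in> set (a#r)" using nth_mem[of i "a#r"] by (simp add: k_def n_def)
    then show "x \<in> V" using V by auto
  qed
  have adj: "\<forall>i<k. \<forall>j<k. E ((a#r)!i) ((a#r)!j) \<longleftrightarrow> (j = Suc i mod k \<or> i = Suc j mod k)"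
  proof (intro allI impI)
    fix i j assume i: "i < k" and j: "j < k"
    have mi: "Suc i mod k = (if Suc i = k then 0 else Suc i)" using i by (rule Suc_mod_lt)
    have mj: "Suc j mod k = (if Suc j = k then 0 else Suc j)" using j by (rule Suc_mod_lt)
    show "E ((a#r)!i) ((a#r)!j) \<longleftrightarrow> (j = Suc i mod k \<or> i = Suc j mod k)"
    proof (cases i)
      case 0
      then show ?thesis
      proof (cases j)
        case 0 then show ?thesis using \<open>i=0\<close> irr mi k3 by auto
      next
        case (Suc j') then show ?thesis using \<open>i=0\<close> key[of j'] j mi mj k3 by (auto simp: k_def)
      qed
    next
      case (Suc i')
      then show ?thesis
      proof (cases j)
        case 0 then show ?thesis using \<open>i=Suc i'\<close> key[of i'] i mi mj k3 sym by (auto simp: k_def)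
      next
        case (Suc j')
        have "E ((a#r)!i) ((a#r)!j) \<longleftrightarrow> (j' = Suc i' \<or> i' = Suc j')"
          using \<open>i=Suc i'\<close> Suc p i j by (auto simp: ipath_def k_def n_def)
        then show ?thesis using \<open>i=Suc i'\<close> Suc mi mj i j by (auto simp: k_def)
      qed
    qed
  qed
  show ?thesis unfolding has_induced_cycle_def
    using k3 inj img adj by (auto simp: k_def n_def)
qed


lemma c4_arith:
  fixes k p q r s :: nat
  assumes "3 \<le> k" "k \<noteq> 4" "p<k" "q<k" "r<k" "s<k" "p\<noteq>q" "r\<noteq>s"
    "r = Suc p mod k \<or> p = Suc r mod k" "s = Suc p mod k \<or> p = Suc s mod k"
    "r = Suc q mod k \<or> q = Suc r mod k" "s = Suc q mod k \<or> q = Suc s mod k"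
  shows False
proof -
  have e: "Suc p mod k = (if Suc p = k then 0 else Suc p)" "Suc q mod k = (if Suc q = k then 0 else Suc q)"
     "Suc r mod k = (if Suc r = k then 0 else Suc r)" "Suc s mod k = (if Suc s = k then 0 else Suc s)"
    using assms by (simp_all add: Suc_mod_lt)
  show False using assms(1-8) assms(9-12)[unfolded e] by (auto split: if_splits)
qed


definition nb :: "('a \<Rightarrow> 'a \<Rightarrow> bool) \<Rightarrow> 'a set \<Rightarrow> 'a \<Rightarrow> 'a set" where
  "nb E W v = {u \<in> W. E v u}"
definition nonisol :: "('a \<Rightarrow> 'a \<Rightarrow> bool) \<Rightarrow> 'a set \<Rightarrow> 'a \<Rightarrow> bool" where
  "nonisol E W x \<longleftrightarrow> (\<exists>w\<in>W. E x w)"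
definition nest :: "('a \<Rightarrow> 'a \<Rightarrow> bool) \<Rightarrow> 'a set \<Rightarrow> 'a \<Rightarrow> bool" where
  "nest E W x \<longleftrightarrow> (\<forall>y1\<in>nb E W x. \<forall>y2\<in>nb E W x. nb E W y1 \<subseteq> nb E W y2 \<or> nb E W y2 \<subseteq> nb E W y1)"
definition far :: "('a \<Rightarrow> 'a \<Rightarrow> bool) \<Rightarrow> 'a set \<Rightarrow> 'a set \<Rightarrow> 'a \<Rightarrow> bool" where
  "far E W S x \<longleftrightarrow> x \<notin> S \<and> (\<forall>w\<in>W. E x w \<longrightarrow> w \<notin> S)"
definition walkC :: "('a \<Rightarrow> 'a \<Rightarrow> bool) \<Rightarrow> 'a set \<Rightarrow> 'a list \<Rightarrow> bool" where
  "walkC E C p \<longleftrightarrow> p \<noteq> [] \<and> set p \<subseteq> C \<and> (\<forall>i. Suc i < length p \<longrightarrow> E (p!i) (p!Suc i))"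

lemma walkC_app:
  assumes "walkC E C xs" "walkC E C ys" "E (last xs) (hd ys)"
  shows "walkC E C (xs @ ys)"
proof -
  have "E ((xs@ys)!i) ((xs@ys)!Suc i)" if "Suc i < length (xs@ys)" for i
  proof -
    consider "Suc i < length xs" | "Suc i = length xs" | "length xs \<le> i" by linarith
    then show ?thesis
    proof cases
      case 1 then show ?thesis using assms(1) by (simp add: nth_append walkC_def)
    next
      case 2
      then have i: "i = length xs - 1" by simp
      then have "(xs@ys)!i = last xs" using assms(1) 2
        by (auto simp add: nth_append walkC_def last_conv_nth)
      moreover have "(xs@ys)!Suc i = hd ys" using 2 assms(2)
        by (simp add: nth_append walkC_def hd_conv_nth)
      ultimately show ?thesis using assms(3) by simp
    next
      case 3
      then have "Suc (i - length xs) < length ys" using that by simp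
      then show ?thesis using 3 assms(2) by (simp add: nth_append walkC_def Suc_diff_le)
    qed
  qed
  then show ?thesis using assms by (auto simp: walkC_def)
qed

lemma walkC_take:
  assumes "walkC E C p" "0 < n"
  shows "walkC E C (take n p)"
  using assms by (auto simp: walkC_def dest: in_set_takeD)

lemma walkC_drop:
  assumes "walkC E C p" "n < length p"
  shows "walkC E C (drop n p)"
  using assms by (auto simp: walkC_def dest: in_set_dropD)

lemma walkC_exists:
  assumes "(\<lambda>a b. a \<in> C \<and> b \<in> C \<and> E a b)\<^sup>*\<^sup>* a b" "a \<in> C"
  shows "\<exists>p. walkC E C p \<and> hd p = a \<and> last p = b"
  using assms
proof (induction rule: rtranclp_induct)
  case base
  then show ?case by (intro exI[of _ "[a]"]) (auto simp: walkC_def)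
next
  case (step b c)
  then obtain p where p: "walkC E C p" "hd p = a" "last p = b" by auto
  have "walkC E C (p @ [c])"
    by (rule walkC_app) (use p step in \<open>auto simp: walkC_def\<close>)
  then show ?case using p by (intro exI[of _ "p@[c]"]) (auto simp: walkC_def)
qed

lemma last_take_Suc: assumes "i < length p" shows "last (take (Suc i) p) = p ! i"
proof -
  have "take (Suc i) p \<noteq> []" using assms by (cases p) auto
  then have "last (take (Suc i) p) = take (Suc i) p ! (length (take (Suc i) p) - 1)" by (rule last_conv_nth)
  then show ?thesis using assms by simp
qed

locale cbg =
  fixes V :: "'a set" and E :: "'a \<Rightarrow> 'a \<Rightarrow> bool"
  assumes finV: "finite V" and sym: "\<And>u v. E u v \<Longrightarrow> E v u" and irr: "\<And>v. \<not> E v v"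
    and nocyc: "\<And>k. k \<noteq> 4 \<Longrightarrow> \<not> has_induced_cycle V E k"
begin

definition good :: "'a set \<Rightarrow> 'a set \<Rightarrow> bool" where
  "good W S \<longleftrightarrow> S = {} \<or> (\<exists>y\<in>V. y \<notin> W \<and> S = nb E W y)"

lemma icons:
  assumes "ipath E xs" "xs \<noteq> []" "a \<notin> set xs" "E a (hd xs)" "\<forall>z\<in>set (tl xs). \<not> E a z"
  shows "ipath E (a # xs)"
  using ipath_Cons[of E a xs] sym irr assms by blast

lemma isingle: "ipath E [a]"
  using ipath_single irr by metis

lemma icycle:
  assumes "ipath E r" "2 \<le> length r" "a \<notin> set r" "set r \<subseteq> V" "a \<in> V"
    "E a (hd r)" "E a (last r)" "\<forall>z\<in>set (butlast (tl r)). \<not> E a z"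
    "Suc (length r) \<noteq> 4"
  shows False
  using ipath_cycle[of E r a V] sym irr assms nocyc by blast

lemma no_tri:
  assumes "a \<in> V" "b \<in> V" "c \<in> V" "E a b" "E b c" "E a c"
  shows False
proof -
  have d: "a \<noteq> b" "b \<noteq> c" "a \<noteq> c" using assms irr by auto
  have "ipath E [b, c]" by (rule icons) (use isingle d assms in auto)
  then show False by (rule icycle[of "[b,c]" a]) (use d assms in auto)
qed


lemma pair_common:
  assumes W: "W \<subseteq> V" and y: "y \<in> V" "y \<notin> W" and S: "S = nb E W y" and C: "C \<subseteq> W" "C \<inter> S = {}"
    and s1: "s1 \<in> S" and s2: "s2 \<in> S" and c1: "c1 \<in> C" "E s1 c1" and c2: "c2 \<in> C" "E s2 c2"
    and conn: "(\<lambda>a b. a \<in> C \<and> b \<in> C \<and> E a b)\<^sup>*\<^sup>* c1 c2"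
  shows "\<exists>c\<in>C. E s1 c \<and> E s2 c"
proof (cases "s1 = s2")
  case True then show ?thesis using c1 by auto
next
  case False
  have s12: "s1 \<noteq> s2" using False by simp
  define P where "P q \<longleftrightarrow> walkC E C q \<and> E s1 (hd q) \<and> E s2 (last q)" for q
  obtain p0 where "walkC E C p0" "hd p0 = c1" "last p0 = c2" using walkC_exists[OF conn c1(1)] by auto
  then have "P p0" using c1 c2 by (simp add: P_def)
  then have ex: "\<exists>n. \<exists>q. P q \<and> length q = n" by auto
  define n where "n = (LEAST n. \<exists>q. P q \<and> length q = n)"
  obtain p where p: "P p" "length p = n" using LeastI_ex[OF ex] n_def by auto
  have minp: "length p \<le> length q" if "P q" for q
    using Least_le[of "\<lambda>n. \<exists>q. P q \<and> length q = n" "length q"] that p(2) n_def by auto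
  have pw: "walkC E C p" and ps1: "E s1 (hd p)" and ps2: "E s2 (last p)" using p(1) P_def by auto
  have pne: "p \<noteq> []" and pC: "set p \<subseteq> C" using pw by (auto simp: walkC_def)
  have sS: "S \<subseteq> W" using S by (auto simp: nb_def)
  have yS: "E y s" if "s \<in> S" for s using that S by (auto simp: nb_def)
  have yC: "\<not> E y c" if "c \<in> C" for c using that C S by (auto simp: nb_def)
  have s1V: "s1 \<in> V" and s2V: "s2 \<in> V" using s1 s2 sS W by auto
  have n12: "\<not> E s1 s2" using no_tri[of y s1 s2] yS s1 s2 s1V s2V y sym by blast
  have s1C: "s1 \<notin> C" and s2C: "s2 \<notin> C" using s1 s2 C by auto
  show ?thesis
  proof (cases "length p = 1")
    case True
    then obtain c where "p = [c]" by (cases p) auto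
    then show ?thesis using ps1 ps2 pC by auto
  next
    case False
    then have len2: "2 \<le> length p" using pne by (cases p) (auto simp: Suc_le_eq)
    have P3: "\<not> E s1 (p!i)" if "0 < i" "i < length p" for i
    proof
      assume a: "E s1 (p!i)"
      have "P (drop i p)" unfolding P_def
        using walkC_drop[OF pw that(2)] a ps2 that by (simp add: hd_drop_conv_nth)
      then have "length p \<le> length (drop i p)" by (rule minp)
      then show False using that by simp
    qed
    have P4: "\<not> E s2 (p!i)" if "Suc i < length p" for i
    proof
      assume a: "E s2 (p!i)"
      have "P (take (Suc i) p)" unfolding P_def
        using walkC_take[OF pw, of "Suc i"] a ps1 that by (simp add: last_take_Suc)
      then have "length p \<le> length (take (Suc i) p)" by (rule minp)
      then show False using that by simp
    qed
    have P1: "\<not> E (p!i) (p!j)" if "Suc i < j" "j < length p" for i j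
    proof
      assume a: "E (p!i) (p!j)"
      have "walkC E C (take (Suc i) p @ drop j p)"
        by (rule walkC_app) (use walkC_take[OF pw, of "Suc i"] walkC_drop[OF pw that(2)] a that
            in \<open>auto simp: last_take_Suc hd_drop_conv_nth\<close>)
      then have "P (take (Suc i) p @ drop j p)" unfolding P_def
        using ps1 ps2 that pne by auto
      then have "length p \<le> length (take (Suc i) p @ drop j p)" by (rule minp)
      then show False using that by simp
    qed
    have P2: "p!i \<noteq> p!j" if "i < j" "j < length p" for i j
    proof
      assume a: "p!i = p!j"
      show False
      proof (cases "Suc j < length p")
        case True
        have "E (p!j) (p!Suc j)" using pw True by (simp add: walkC_def)
        then have "walkC E C (take (Suc i) p @ drop (Suc j) p)"
          by (intro walkC_app) (use walkC_take[OF pw, of "Suc i"] walkC_drop[OF pw True] a that True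
              in \<open>auto simp: last_take_Suc hd_drop_conv_nth\<close>)
        then have "P (take (Suc i) p @ drop (Suc j) p)" unfolding P_def
          using ps1 ps2 that pne True by auto
        then have "length p \<le> length (take (Suc i) p @ drop (Suc j) p)" by (rule minp)
        then show False using that True by simp
      next
        case False
        then have j: "j = length p - 1" using that by simp
        have "P (take (Suc i) p)" unfolding P_def
          using walkC_take[OF pw, of "Suc i"] ps1 ps2 that a j pne
          by (simp add: last_take_Suc last_conv_nth)
        then have "length p \<le> length (take (Suc i) p)" by (rule minp)
        then show False using that by simp
      qed
    qed
    have ip: "ipath E p"
    proof -
      have "distinct p"
        unfolding distinct_conv_nth using P2 by (metis linorder_neqE_nat)
      moreover have "E (p!i) (p!j) \<longleftrightarrow> (j = Suc i \<or> i = Suc j)" if "i < length p" "j < length p" for i j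
      proof -
        consider "j = Suc i" | "i = Suc j" | "i = j" | "Suc i < j" | "Suc j < i" by linarith
        then show ?thesis
        proof cases
          case 1 then show ?thesis using pw that by (simp add: walkC_def)
        next
          case 2 then show ?thesis using pw that sym by (simp add: walkC_def)
        next
          case 3 then show ?thesis using irr by simp
        next
          case 4 then show ?thesis using P1 that by simp
        next
          case 5 then show ?thesis using P1[of j i] that sym by auto
        qed
      qed
      ultimately show ?thesis by (simp add: ipath_def)
    qed
    have ip2: "ipath E (p @ [s2])"
    proof (rule ipath_snoc[of E s2 p])
      show "\<forall>z\<in>set (butlast p). \<not> E z s2"
      proof
        fix z assume "z \<in> set (butlast p)"
        then obtain i where "i < length (butlast p)" "z = butlast p ! i" by (auto simp: in_set_conv_nth)
        then have "Suc i < length p" "z = p ! i" using pne by (auto simp: nth_butlast)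
        then show "\<not> E z s2" using P4 sym by blast
      qed
    qed (use sym irr ip pne s2C pC ps2 in auto)
    have ip3: "ipath E (s1 # p @ [s2])"
    proof (rule icons)
      show "\<forall>z\<in>set (tl (p @ [s2])). \<not> E s1 z"
      proof
        fix z assume "z \<in> set (tl (p @ [s2]))"
        then have "z \<in> set (tl p) \<or> z = s2" using pne by auto
        then show "\<not> E s1 z"
        proof
          assume "z \<in> set (tl p)"
          then obtain i where "i < length (tl p)" "z = tl p ! i" by (auto simp: in_set_conv_nth)
          then have "Suc i < length p" "z = p ! Suc i" using pne by (auto simp: nth_tl)
          then show ?thesis using P3 by blast
        qed (use n12 in auto)
      qed
    qed (use ip2 pne s1C pC ps1 s12 in auto)
    have False
    proof (rule icycle[OF ip3])
      show "set (s1 # p @ [s2]) \<subseteq> V" using pC C W s1V s2V by auto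
      show "y \<notin> set (s1 # p @ [s2])" using y pC C sS s1 s2 by auto
      show "\<forall>z\<in>set (butlast (tl (s1 # p @ [s2]))). \<not> E y z" using yC pC by auto
    qed (use len2 y yS s1 s2 in auto)
    then show ?thesis ..
  qed
qed


lemma helly:
  assumes W: "W \<subseteq> V" and y: "y \<in> V" "y \<notin> W" and S: "S = nb E W y" and C: "C \<subseteq> W" "C \<inter> S = {}"
    and touch: "\<forall>s\<in>S. \<exists>c\<in>C. E s c"
    and conn: "\<forall>c1\<in>C. \<forall>c2\<in>C. (\<lambda>a b. a \<in> C \<and> b \<in> C \<and> E a b)\<^sup>*\<^sup>* c1 c2"
    and F: "F \<subseteq> S" "F \<noteq> {}"
  shows "\<exists>c\<in>C. \<forall>s\<in>F. E s c"
  using F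
proof (induction "card F" arbitrary: F rule: less_induct)
  case less
  have sS: "S \<subseteq> W" using S by (auto simp: nb_def)
  have "S \<subseteq> V" using sS W by auto
  then have finS: "finite S" using finV by (rule finite_subset)
  have finF: "finite F" using less.prems(1) finS by (rule finite_subset)
  have yS: "E y s" if "s \<in> S" for s using that S by (auto simp: nb_def)
  have pair: "\<exists>c\<in>C. E s1 c \<and> E s2 c" if ss: "s1 \<in> S" "s2 \<in> S" for s1 s2
  proof -
    obtain c1 where c1: "c1 \<in> C" "E s1 c1" using touch ss(1) by blast
    obtain c2 where c2: "c2 \<in> C" "E s2 c2" using touch ss(2) by blast
    show ?thesis
      by (rule pair_common[OF W y S C ss c1 c2 conn[rule_format, OF c1(1) c2(1)]])
  qed
  obtain s1 where s1: "s1 \<in> F" using less.prems by auto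
  show ?case
  proof (cases "F \<subseteq> {s1}")
    case True
    obtain c where "c \<in> C" "E s1 c" using touch s1 less.prems by blast
    then show ?thesis using True by blast
  next
    case False
    then obtain s2 where s2: "s2 \<in> F" "s2 \<noteq> s1" by auto
    show ?thesis
    proof (cases "F \<subseteq> {s1, s2}")
      case True
      obtain c where "c \<in> C" "E s1 c" "E s2 c" using pair s1 s2 less.prems by blast
      then show ?thesis using True by blast
    next
      case False
      then obtain s3 where s3: "s3 \<in> F" "s3 \<noteq> s1" "s3 \<noteq> s2" by auto
      have sub: "\<exists>c\<in>C. \<forall>s\<in>F - {t}. E s c" if "t \<in> F" "u \<in> F" "u \<noteq> t" for t u
      proof (rule less.hyps)
        show "card (F - {t}) < card F" using finF that(1) by (rule card_Diff1_less)
      qed (use less.prems that in auto)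
      obtain c1 where c1: "c1 \<in> C" "\<forall>s\<in>F - {s1}. E s c1" using sub[OF s1 s2(1)] s2 by blast
      obtain c2 where c2: "c2 \<in> C" "\<forall>s\<in>F - {s2}. E s c2" using sub[OF s2(1) s1] s2 by blast
      obtain c3 where c3: "c3 \<in> C" "\<forall>s\<in>F - {s3}. E s c3" using sub[OF s3(1) s1] s3 by blast
      show ?thesis
      proof (rule ccontr)
        assume no: "\<not> (\<exists>c\<in>C. \<forall>s\<in>F. E s c)"
        have n1: "\<not> E s1 c1" using no c1 by blast
        have n2: "\<not> E s2 c2" using no c2 by blast
        have n3: "\<not> E s3 c3" using no c3 by blast
        have FS: "s1 \<in> S" "s2 \<in> S" "s3 \<in> S" using s1 s2 s3 less.prems by auto
        have sV: "s1 \<in> V" "s2 \<in> V" "s3 \<in> V" using FS sS W by auto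
        have cV: "c1 \<in> V" "c2 \<in> V" "c3 \<in> V" using c1 c2 c3 C W by auto
        have e: "E s2 c1" "E s3 c1" "E s1 c2" "E s3 c2" "E s1 c3" "E s2 c3"
          using c1 c2 c3 s1 s2 s3 by auto
        have ss: "\<not> E s1 s2" "\<not> E s1 s3" "\<not> E s2 s3"
          using no_tri[of y s1 s2] no_tri[of y s1 s3] no_tri[of y s2 s3] yS FS sV y by blast+
        have cc: "\<not> E c1 c2" "\<not> E c1 c3" "\<not> E c2 c3" "\<not> E c2 c1" "\<not> E c3 c1" "\<not> E c3 c2"
          using no_tri[of c1 c2 s3] no_tri[of c1 c3 s2] no_tri[of c2 c3 s1] e cV sV sym by blast+
        have ne: "c1 \<noteq> s1" "c1 \<noteq> s2" "c1 \<noteq> s3" "c2 \<noteq> s1" "c2 \<noteq> s2" "c2 \<noteq> s3"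
          "c3 \<noteq> s1" "c3 \<noteq> s2" "c3 \<noteq> s3" using c1 c2 c3 FS C by auto
        have nc: "c1 \<noteq> c2" "c1 \<noteq> c3" "c2 \<noteq> c3" using e n1 n2 n3 by auto
        have e2: "E c1 s3" "E c3 s2" "\<not> E c3 s3" using e n3 sym by blast+
        note facts = ne ne[THEN not_sym] nc nc[THEN not_sym] e e2 cc ss n1 n2 n3 s2(2) s3(2,3)
          s2(2)[THEN not_sym] s3(2,3)[THEN not_sym]
        have i4: "ipath E [s3, c2]" by (rule icons[OF isingle]) (simp_all add: facts)
        have i3: "ipath E [c1, s3, c2]" by (rule icons[OF i4]) (simp_all add: facts)
        have i2: "ipath E [s2, c1, s3, c2]" by (rule icons[OF i3]) (simp_all add: facts)
        have i1: "ipath E [c3, s2, c1, s3, c2]" by (rule icons[OF i2]) (simp_all add: facts)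
        show False
          by (rule icycle[OF i1, of s1]) (simp_all add: facts sV cV)
      qed
    qed
  qed
qed


lemma step_handle:
  assumes IH: "\<And>W' S' x'. W' \<subset> W \<Longrightarrow> good W' S' \<Longrightarrow> x' \<in> W' \<Longrightarrow> nonisol E W' x' \<Longrightarrow> far E W' S' x'
        \<Longrightarrow> \<exists>x\<in>W'. nonisol E W' x \<and> nest E W' x \<and> far E W' S' x"
    and W: "W \<subseteq> V" and g: "good W S" and x1: "x1 \<in> W" "nonisol E W x1" "far E W S x1"
    and ys: "ys \<in> W" "ys \<notin> S" "\<forall>s\<in>S. E ys s" "ys \<noteq> x1"
  shows "\<exists>x\<in>W. nonisol E W x \<and> nest E W x \<and> far E W S x"
proof -
  define W' where "W' = W - {ys}"
  have W'W: "W' \<subset> W" using ys(1) W'_def by auto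
  have W'V: "W' \<subseteq> V" using W W'_def by auto
  have ysV: "ys \<in> V" using ys W by auto
  have ysW': "ys \<notin> W'" using W'_def by auto
  have nbW: "nb E W v = nb E W' v \<union> (if E v ys then {ys} else {})" for v
    using ys(1) by (auto simp: nb_def W'_def)
  have notS: "v \<notin> S" if "\<not> E ys v" for v using ys(3) that by auto
  show ?thesis
  proof (cases "\<exists>x1'\<in>W'. nonisol E W' x1' \<and> far E W' (nb E W' ys) x1'")
    case True
    then obtain x1' where x1': "x1' \<in> W'" "nonisol E W' x1'" "far E W' (nb E W' ys) x1'" by blast
    have g': "good W' (nb E W' ys)" unfolding good_def using ysV ysW' by auto
    obtain x where x: "x \<in> W'" "nonisol E W' x" "nest E W' x" "far E W' (nb E W' ys) x"
      using IH[OF W'W g' x1'] by blast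
    have nx: "\<not> E ys x" using x(1) x(4) by (auto simp: far_def nb_def)
    have nbx: "nb E W x = nb E W' x" using nbW[of x] nx sym by auto
    have nby: "nb E W y' = nb E W' y'" if y'x: "y' \<in> nb E W' x" for y'
    proof -
      have "y' \<notin> nb E W' ys" using x(4) y'x by (auto simp: far_def nb_def)
      then have "\<not> E ys y'" using y'x by (auto simp: nb_def)
      then show ?thesis using nbW[of y'] sym by auto
    qed
    have "nest E W x" unfolding nest_def
    proof (intro ballI)
      fix y1 y2 assume a: "y1 \<in> nb E W x" "y2 \<in> nb E W x"
      then have "y1 \<in> nb E W' x" "y2 \<in> nb E W' x" using nbx by auto
      then show "nb E W y1 \<subseteq> nb E W y2 \<or> nb E W y2 \<subseteq> nb E W y1"
        using x(3) nby by (auto simp: nest_def)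
    qed
    moreover have "nonisol E W x" using x(2) W'_def by (auto simp: nonisol_def)
    moreover have "far E W S x"
    proof -
      have "x \<notin> S" using notS nx by auto
      moreover have "w \<notin> S" if w: "w \<in> W" "E x w" for w
      proof -
        have "w \<in> nb E W x" using w by (simp add: nb_def)
        then have wx: "w \<in> nb E W' x" using nbx by simp
        then have "w \<notin> nb E W' ys" using x(4) by (auto simp: far_def nb_def)
        then have "\<not> E ys w" using wx by (auto simp: nb_def)
        then show ?thesis using notS by blast
      qed
      ultimately show ?thesis by (auto simp: far_def)
    qed
    ultimately show ?thesis using x(1) W'_def by blast
  next
    case False
    have B: "E ys z \<or> (\<exists>w\<in>W'. E z w \<and> E ys w)" if z: "z \<in> W'" "nonisol E W' z" for z
      using False z by (auto simp: far_def nb_def)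
    have N2: False if uv: "u \<in> W'" "v \<in> W'" "E u v" "\<not> E ys u" "\<not> E ys v"
      "a \<in> W'" "E u a" "E ys a" "b \<in> W'" "E v b" "E ys b" for u v a b
    proof -
      have inV: "u \<in> V" "v \<in> V" "a \<in> V" "b \<in> V" using uv W'V by auto
      have ab: "a \<noteq> b" using no_tri[of u v a] inV uv sym by blast
      have av: "\<not> E a v" using no_tri[of u a v] inV uv by blast
      have ub: "\<not> E u b" using no_tri[of u v b] inV uv by blast
      have nab: "\<not> E a b" using no_tri[of ys a b] inV uv ysV by blast
      have d: "a \<noteq> u" "u \<noteq> v" "v \<noteq> b" "a \<noteq> v" "u \<noteq> b" "ys \<noteq> a" "ys \<noteq> u" "ys \<noteq> v" "ys \<noteq> b"
        using uv irr ysW' by auto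
      have eau: "E a u" "E b v" using uv sym by blast+
      note facts = d d[THEN not_sym] ab ab[THEN not_sym] av ub nab uv eau
      have i3: "ipath E [v, b]" by (rule icons[OF isingle]) (simp_all add: facts)
      have i2: "ipath E [u, v, b]" by (rule icons[OF i3]) (simp_all add: facts)
      have i1: "ipath E [a, u, v, b]" by (rule icons[OF i2]) (simp_all add: facts)
      show False by (rule icycle[OF i1, of ys]) (simp_all add: facts inV ysV)
    qed
    have g2: "good W' S"
    proof -
      { assume "S \<noteq> {}"
        then obtain y where y: "y \<in> V" "y \<notin> W" "S = nb E W y" using g by (auto simp: good_def)
        have "nb E W' y = S" using y ys(2) by (auto simp: nb_def W'_def)
        then have ?thesis using y unfolding good_def W'_def by auto }
      then show ?thesis unfolding good_def by blast
    qed
    have x1W': "x1 \<in> W'" using x1(1) ys(4) W'_def by auto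
    have far1: "far E W' S x1" using x1(3) W'_def by (auto simp: far_def)
    show ?thesis
    proof (cases "nonisol E W' x1")
      case True
      obtain x where x: "x \<in> W'" "nonisol E W' x" "nest E W' x" "far E W' S x"
        using IH[OF W'W g2 x1W' True far1] by blast
      have xV: "x \<in> V" using x(1) W'V by auto
      have "nest E W x"
      proof (cases "E ys x")
        case True
        have nbx: "nb E W x = insert ys (nb E W' x)" using nbW[of x] sym True by auto
        have P: "nb E W y' = nb E W' y' \<and> nb E W y' \<subseteq> nb E W ys" if y'x: "y' \<in> nb E W' x" for y'
        proof -
          have y': "y' \<in> W'" "E x y'" using y'x by (auto simp: nb_def)
          have y'V: "y' \<in> V" using y'(1) W'V by auto
          have nys: "\<not> E y' ys" using no_tri[of x y' ys] y' True sym xV y'V ysV by blast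
          have eq: "nb E W y' = nb E W' y'" using nbW[of y'] nys by simp
          have "nonisol E W' y'" using x(1) y'(2) sym by (auto simp: nonisol_def)
          then obtain w0 where w0: "w0 \<in> W'" "E y' w0" "E ys w0" using B[OF y'(1)] nys sym by blast
          have sub: "nb E W y' \<subseteq> nb E W ys"
          proof
            fix w assume "w \<in> nb E W y'"
            then have w: "w \<in> W" "E y' w" by (auto simp: nb_def)
            have "w \<noteq> ys" using nys w by auto
            then have wW': "w \<in> W'" using w W'_def by auto
            have "E ys w"
            proof (rule ccontr)
              assume nw: "\<not> E ys w"
              have "nonisol E W' w" using y'(1) w(2) sym by (auto simp: nonisol_def)
              then obtain w2 where w2: "w2 \<in> W'" "E w w2" "E ys w2" using B[OF wW'] nw by blast
              show False by (rule N2[of y' w w0 w2]) (use y' w wW' w0 w2 nw nys sym in auto)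
            qed
            then show "w \<in> nb E W ys" using w by (simp add: nb_def)
          qed
          show ?thesis using eq sub by simp
        qed
        show ?thesis unfolding nest_def
        proof (intro ballI)
          fix y1 y2 assume a: "y1 \<in> nb E W x" "y2 \<in> nb E W x"
          then have o: "y1 = ys \<or> y1 \<in> nb E W' x" "y2 = ys \<or> y2 \<in> nb E W' x" using nbx by auto
          show "nb E W y1 \<subseteq> nb E W y2 \<or> nb E W y2 \<subseteq> nb E W y1"
          proof (cases "y1 = ys")
            case True
            then show ?thesis using o(2) P by auto
          next
            case n1: False
            show ?thesis
            proof (cases "y2 = ys")
              case True
              then show ?thesis using o(1) n1 P by auto
            next
              case False
              then have "y1 \<in> nb E W' x" "y2 \<in> nb E W' x" using o n1 by auto
              then show ?thesis using x(3) P unfolding nest_def by metis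
            qed
          qed
        qed
      next
        case False
        have nbx: "nb E W x = nb E W' x" using nbW[of x] sym False by auto
        obtain w0 where w0: "w0 \<in> W'" "E x w0" "E ys w0" using B[OF x(1) x(2)] False by blast
        have P: "nb E W y' = insert ys (nb E W' y')" if y'x: "y' \<in> nb E W' x" for y'
        proof -
          have y': "y' \<in> W'" "E x y'" using y'x by (auto simp: nb_def)
          have "E ys y'"
          proof (rule ccontr)
            assume n: "\<not> E ys y'"
            have "nonisol E W' y'" using x(1) y'(2) sym by (auto simp: nonisol_def)
            then obtain w2 where w2: "w2 \<in> W'" "E y' w2" "E ys w2" using B[OF y'(1)] n by blast
            show False by (rule N2[of x y' w0 w2]) (use x(1) y' w0 w2 n False in auto)
          qed
          then show ?thesis using nbW[of y'] sym by auto
        qed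
        show ?thesis unfolding nest_def
        proof (intro ballI)
          fix y1 y2 assume a: "y1 \<in> nb E W x" "y2 \<in> nb E W x"
          then have a': "y1 \<in> nb E W' x" "y2 \<in> nb E W' x" using nbx by auto
          then have "nb E W' y1 \<subseteq> nb E W' y2 \<or> nb E W' y2 \<subseteq> nb E W' y1" using x(3) by (auto simp: nest_def)
          then show "nb E W y1 \<subseteq> nb E W y2 \<or> nb E W y2 \<subseteq> nb E W y1"
            using P[OF a'(1)] P[OF a'(2)] by auto
        qed
      qed
      moreover have "nonisol E W x" using x(2) W'_def by (auto simp: nonisol_def)
      moreover have "far E W S x"
        using x(4) ys(2) W'_def by (auto simp: far_def)
      ultimately show ?thesis using x(1) W'_def by blast
    next
      case False
      have nb1: "nb E W x1 = {ys}"
      proof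
        show "nb E W x1 \<subseteq> {ys}"
        proof
          fix w assume "w \<in> nb E W x1"
          then have w: "w \<in> W" "E x1 w" by (auto simp: nb_def)
          show "w \<in> {ys}"
          proof (rule ccontr)
            assume "w \<notin> {ys}"
            then have "w \<in> W'" using w W'_def by auto
            then show False using False w by (auto simp: nonisol_def)
          qed
        qed
        obtain w where w: "w \<in> W" "E x1 w" using x1(2) by (auto simp: nonisol_def)
        have "w = ys"
        proof (rule ccontr)
          assume "w \<noteq> ys"
          then have "w \<in> W'" using w W'_def by auto
          then show False using False w by (auto simp: nonisol_def)
        qed
        then show "{ys} \<subseteq> nb E W x1" using w ys(1) by (auto simp: nb_def)
      qed
      have "nest E W x1" unfolding nest_def using nb1 by auto
      then show ?thesis using x1 by blast
    qed
  qed
qed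


lemma rtc_sym:
  assumes "\<And>a b. r a b \<Longrightarrow> r b a" "r\<^sup>*\<^sup>* a b"
  shows "r\<^sup>*\<^sup>* b a"
  using assms(2)
proof (induction rule: rtranclp_induct)
  case base then show ?case by simp
next
  case (step b c)
  then show ?case using assms(1) converse_rtranclp_into_rtranclp by metis
qed

lemma mainL:
  assumes "W \<subseteq> V" "good W S" "x1 \<in> W" "nonisol E W x1" "far E W S x1"
  shows "\<exists>x\<in>W. nonisol E W x \<and> nest E W x \<and> far E W S x"
  using assms
proof (induction "card W" arbitrary: W S x1 rule: less_induct)
  case less
  have WV: "W \<subseteq> V" and g: "good W S" and x1: "x1 \<in> W" "nonisol E W x1" "far E W S x1"
    using less.prems by auto
  have finW: "finite W" using WV finV by (rule finite_subset)
  have IH: "\<exists>x\<in>W'. nonisol E W' x \<and> nest E W' x \<and> far E W' S' x"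
    if h: "W' \<subset> W" "good W' S'" "x' \<in> W'" "nonisol E W' x'" "far E W' S' x'" for W' S' x'
  proof -
    have "card W' < card W" using finW h(1) by (rule psubset_card_mono)
    then show ?thesis using less.hyps[of W' S' x'] h WV by auto
  qed
  define R where "R a b \<longleftrightarrow> a \<in> W - S \<and> b \<in> W - S \<and> E a b" for a b
  define C where "C = {v. R\<^sup>*\<^sup>* x1 v}"
  define T where "T = {s\<in>S. \<exists>c\<in>C. E s c}"
  define W0 where "W0 = C \<union> T"
  have x1S: "x1 \<notin> S" using x1(3) by (simp add: far_def)
  have CWS: "C \<subseteq> W - S"
  proof
    fix v assume "v \<in> C"
    then have "R\<^sup>*\<^sup>* x1 v" by (simp add: C_def)
    then show "v \<in> W - S"
      by (induction rule: rtranclp_induct) (use x1(1) x1S in \<open>auto simp: R_def\<close>)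
  qed
  have x1C: "x1 \<in> C" by (simp add: C_def)
  have clos: "w \<in> C" if h: "c \<in> C" "w \<in> W" "w \<notin> S" "E c w" for c w
  proof -
    have "R c w" using h CWS by (auto simp: R_def)
    moreover have "R\<^sup>*\<^sup>* x1 c" using h(1) by (simp add: C_def)
    ultimately show ?thesis by (simp add: C_def)
  qed
  have SW: "S \<subseteq> W" using g by (auto simp: good_def nb_def)
  have TS: "T \<subseteq> S" by (auto simp: T_def)
  have W0W: "W0 \<subseteq> W" using CWS TS SW by (auto simp: W0_def)
  have CS: "C \<inter> S = {}" using CWS by auto
  have nbC: "nb E W c = nb E W0 c" if cC: "c \<in> C" for c
  proof
    show "nb E W0 c \<subseteq> nb E W c" using W0W by (auto simp: nb_def)
    show "nb E W c \<subseteq> nb E W0 c"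
    proof
      fix w assume "w \<in> nb E W c"
      then have w: "w \<in> W" "E c w" by (auto simp: nb_def)
      show "w \<in> nb E W0 c"
      proof (cases "w \<in> S")
        case True
        then have "w \<in> T" using cC w sym by (auto simp: T_def)
        then show ?thesis using w by (auto simp: nb_def W0_def)
      next
        case False
        then have "w \<in> C" using clos[OF cC w(1) False w(2)] by simp
        then show ?thesis using w by (auto simp: nb_def W0_def)
      qed
    qed
  qed
  show ?case
  proof (cases "W0 = W")
    case False
    then have W0W': "W0 \<subset> W" using W0W by auto
    have gT: "good W0 T"
    proof (cases "S = {}")
      case True then show ?thesis by (simp add: good_def T_def)
    next
      case False
      then obtain y where y: "y \<in> V" "y \<notin> W" "S = nb E W y" using g by (auto simp: good_def)
      have "nb E W0 y = T"
      proof
        show "nb E W0 y \<subseteq> T"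
        proof
          fix u assume "u \<in> nb E W0 y"
          then have u: "u \<in> W0" "E y u" by (auto simp: nb_def)
          show "u \<in> T"
          proof (rule ccontr)
            assume "u \<notin> T"
            then have "u \<in> C" using u by (auto simp: W0_def)
            then have "u \<in> W" "u \<notin> S" using CWS by auto
            then show False using u y(3) by (auto simp: nb_def)
          qed
        qed
        show "T \<subseteq> nb E W0 y" using TS y(3) by (auto simp: nb_def W0_def)
      qed
      then show ?thesis using y W0W unfolding good_def by auto
    qed
    have x1W0: "x1 \<in> W0" using x1C by (simp add: W0_def)
    obtain w where w: "w \<in> W" "E x1 w" using x1(2) by (auto simp: nonisol_def)
    have "w \<notin> S" using x1(3) w by (auto simp: far_def)
    then have "w \<in> C" using clos[OF x1C w(1)] w(2) by simp
    then have ni: "nonisol E W0 x1" using w by (auto simp: nonisol_def W0_def)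
    have fa: "far E W0 T x1" using x1(3) TS W0W by (auto simp: far_def)
    obtain x where x: "x \<in> W0" "nonisol E W0 x" "nest E W0 x" "far E W0 T x"
      using IH[OF W0W' gT x1W0 ni fa] by blast
    have xC: "x \<in> C" using x(1) x(4) by (auto simp: far_def W0_def)
    have nbx: "nb E W x = nb E W0 x" using nbC xC by simp
    have nby: "nb E W y' = nb E W0 y'" if y'x: "y' \<in> nb E W0 x" for y'
    proof -
      have "y' \<in> W0" "E x y'" using y'x by (auto simp: nb_def)
      then have "y' \<in> C" using x(4) by (auto simp: far_def W0_def)
      then show ?thesis by (rule nbC)
    qed
    have "nest E W x" unfolding nest_def
    proof (intro ballI)
      fix y1 y2 assume a: "y1 \<in> nb E W x" "y2 \<in> nb E W x"
      then have "y1 \<in> nb E W0 x" "y2 \<in> nb E W0 x" using nbx by auto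
      then show "nb E W y1 \<subseteq> nb E W y2 \<or> nb E W y2 \<subseteq> nb E W y1"
        using x(3) nby by (auto simp: nest_def)
    qed
    moreover have "nonisol E W x" using x(2) W0W by (auto simp: nonisol_def)
    moreover have "far E W S x"
    proof -
      have "x \<notin> S" using xC CS by auto
      moreover have "w \<notin> S" if w: "w \<in> W" "E x w" for w
      proof -
        have "w \<in> nb E W0 x" using w nbx by (auto simp: nb_def)
        then have "w \<in> W0" "w \<notin> T" using x(4) by (auto simp: far_def nb_def)
        then have "w \<in> C" by (simp add: W0_def)
        then show ?thesis using CS by auto
      qed
      ultimately show ?thesis by (auto simp: far_def)
    qed
    ultimately show ?thesis using x(1) W0W by blast
  next
    case True
    show ?thesis
    proof (cases "S = {}")
      case True
      obtain ys where ys: "ys \<in> W" "E x1 ys" using x1(2) by (auto simp: nonisol_def)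
      have "ys \<noteq> x1" using ys irr by auto
      show ?thesis
        by (rule step_handle[OF IH WV g x1 ys(1)]) (use True \<open>ys \<noteq> x1\<close> in auto)
    next
      case False
      then obtain y where y: "y \<in> V" "y \<notin> W" "S = nb E W y" using g by (auto simp: good_def)
      have touch: "\<forall>s\<in>S. \<exists>c\<in>C. E s c"
      proof
        fix s assume "s \<in> S"
        then have "s \<in> W0" using SW True by auto
        moreover have "s \<notin> C" using \<open>s \<in> S\<close> CS by auto
        ultimately have "s \<in> T" by (simp add: W0_def)
        then show "\<exists>c\<in>C. E s c" by (simp add: T_def)
      qed
      define RC where "RC a b \<longleftrightarrow> a \<in> C \<and> b \<in> C \<and> E a b" for a b
      have RCsym: "RC a b \<Longrightarrow> RC b a" for a b using sym by (auto simp: RC_def)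
      have toC: "RC\<^sup>*\<^sup>* x1 c" if "c \<in> C" for c
      proof -
        have "R\<^sup>*\<^sup>* x1 c" using that by (simp add: C_def)
        then show ?thesis
        proof (induction rule: rtranclp_induct)
          case base then show ?case by simp
        next
          case (step b c)
          have "b \<in> C" using step.hyps(1) by (simp add: C_def)
          moreover have "c \<in> C" using step.hyps by (simp add: C_def)
          ultimately have "RC b c" using step.hyps(2) by (simp add: RC_def R_def)
          then show ?case using step.IH by (rule rtranclp.rtrancl_into_rtrancl[rotated])
        qed
      qed
      have conn: "\<forall>c1\<in>C. \<forall>c2\<in>C. (\<lambda>a b. a \<in> C \<and> b \<in> C \<and> E a b)\<^sup>*\<^sup>* c1 c2"
      proof (intro ballI)
        fix c1 c2 assume "c1 \<in> C" "c2 \<in> C"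
        have "RC\<^sup>*\<^sup>* c1 x1" using rtc_sym[of RC, OF RCsym toC[OF \<open>c1 \<in> C\<close>]] by blast
        then have "RC\<^sup>*\<^sup>* c1 c2" using toC[OF \<open>c2 \<in> C\<close>] by simp
        then show "(\<lambda>a b. a \<in> C \<and> b \<in> C \<and> E a b)\<^sup>*\<^sup>* c1 c2" unfolding RC_def by simp
      qed
      have CW: "C \<subseteq> W" using CWS by auto
      obtain c where c: "c \<in> C" "\<forall>s\<in>S. E s c"
        using helly[OF WV y(1) y(2) y(3) CW CS touch conn, of S] False by blast
      have cx: "c \<noteq> x1"
      proof
        assume "c = x1"
        obtain s where "s \<in> S" using False by auto
        then have "E x1 s" "s \<in> W" using c \<open>c = x1\<close> sym SW by auto
        then show False using x1(3) \<open>s \<in> S\<close> by (auto simp: far_def)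
      qed
      show ?thesis
        by (rule step_handle[OF IH WV g x1]) (use c CW CS sym cx in auto)
    qed
  qed
qed

end


lemma two_elems:
  assumes "finite A" "2 \<le> card A"
  obtains a b where "a \<in> A" "b \<in> A" "a \<noteq> b"
proof -
  have "A \<noteq> {}" using assms by auto
  then obtain a where a: "a \<in> A" by auto
  have "A - {a} \<noteq> {}"
  proof
    assume "A - {a} = {}"
    then have "A \<subseteq> {a}" by auto
    then have "card A \<le> card {a}" by (intro card_mono) auto
    then show False using assms(2) by simp
  qed
  then obtain b where "b \<in> A - {a}" by auto
  then show ?thesis using that a by auto
qed

theorem theorem3p7:
  fixes V :: "'a set" and E :: "'a \<Rightarrow> 'a \<Rightarrow> bool"
  assumes "simple_graph V E"
  shows "degree_perfect V E \<longleftrightarrow> (\<forall>k. k \<noteq> 4 \<longrightarrow> \<not> has_induced_cycle V E k)"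
proof
  have finV: "finite V" and sym: "\<And>u v. E u v \<Longrightarrow> E v u" and irr: "\<And>v. \<not> E v v"
    using assms by (auto simp: simple_graph_def)
  show "degree_perfect V E \<Longrightarrow> \<forall>k. k \<noteq> 4 \<longrightarrow> \<not> has_induced_cycle V E k"
  proof (intro allI impI notI)
    fix k assume dp: "degree_perfect V E" and k4: "k \<noteq> 4" and hc: "has_induced_cycle V E k"
    obtain f where k3: "3 \<le> k" and inj: "inj_on f {0..<k}" and img: "f ` {0..<k} \<subseteq> V"
      and adj: "\<forall>i<k. \<forall>j<k. E (f i) (f j) \<longleftrightarrow> (j = Suc i mod k \<or> i = Suc j mod k)"
      using hc by (auto simp: has_induced_cycle_def)
    define S0 where "S0 = f ` {0..<k}"
    have S0V: "S0 \<subseteq> V" using img by (simp add: S0_def)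
    have finS0: "finite S0" by (simp add: S0_def)
    have S0ne: "S0 \<noteq> {}" using k3 by (auto simp: S0_def)
    have deg: "2 \<le> ideg E S0 v" if vS: "v \<in> S0" for v
    proof -
      obtain i where i: "i < k" "v = f i" using vS by (auto simp: S0_def)
      define ja where "ja = Suc i mod k"
      define jb where "jb = (if i = 0 then k - 1 else i - 1)"
      have ja: "ja < k" using k3 by (simp add: ja_def)
      have jb: "jb < k" using i k3 by (auto simp: jb_def)
      have "Suc jb mod k = i" using i k3 by (auto simp: jb_def Suc_mod_lt)
      then have eb: "E v (f jb)" using adj i jb by auto
      have ea: "E v (f ja)" using adj i ja by (auto simp: ja_def)
      have "ja \<noteq> jb" using i k3 by (auto simp: ja_def jb_def Suc_mod_lt)
      then have "f ja \<noteq> f jb" using inj ja jb by (auto simp: inj_on_def)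
      moreover have "{f ja, f jb} \<subseteq> {u \<in> S0. E v u}" using ea eb ja jb by (auto simp: S0_def)
      ultimately have "card {f ja, f jb} \<le> card {u \<in> S0. E v u}"
        using finS0 by (intro card_mono) auto
      then show ?thesis using \<open>f ja \<noteq> f jb\<close> by (simp add: ideg_def)
    qed
    have md: "2 \<le> min_degree E S0"
      unfolding min_degree_def using finS0 S0ne deg by (simp add: Min_ge_iff)
    have bound: "t \<le> 1" if hb: "has_biclique E S0 t" for t
    proof (rule ccontr)
      assume "\<not> t \<le> 1"
      then have t2: "2 \<le> t" by simp
      obtain A B where AB: "A \<subseteq> S0" "B \<subseteq> S0" "A \<inter> B = {}" "card A = t" "card B = t" "finite A" "finite B"
        "\<forall>a\<in>A. \<forall>b\<in>B. E a b" using hb by (auto simp: has_biclique_def)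
      obtain a1 a2 where a: "a1 \<in> A" "a2 \<in> A" "a1 \<noteq> a2" using two_elems[of A] AB t2 by auto
      obtain b1 b2 where b: "b1 \<in> B" "b2 \<in> B" "b1 \<noteq> b2" using two_elems[of B] AB t2 by auto
      obtain p where p: "p < k" "a1 = f p" using a AB by (auto simp: S0_def)
      obtain q where q: "q < k" "a2 = f q" using a AB by (auto simp: S0_def)
      obtain r where r: "r < k" "b1 = f r" using b AB by (auto simp: S0_def)
      obtain s where s: "s < k" "b2 = f s" using b AB by (auto simp: S0_def)
      have "p \<noteq> q" using a p q by auto
      moreover have "r \<noteq> s" using b r s by auto
      moreover have "E (f p) (f r)" "E (f p) (f s)" "E (f q) (f r)" "E (f q) (f s)"
        using AB a b p q r s by auto
      ultimately show False
        using c4_arith[of k p q r s] k3 k4 p q r s adj by blast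
    qed
    have hb0: "has_biclique E S0 0" unfolding has_biclique_def by (intro exI[of _ "{}"]) auto
    have "biclique_number E S0 \<le> 1"
      unfolding biclique_number_def using GreatestI_nat[of "has_biclique E S0" 0 1, OF hb0 bound] bound
      by blast
    moreover have "min_degree E S0 \<le> biclique_number E S0"
      using dp S0V S0ne by (auto simp: degree_perfect_def)
    ultimately show False using md by simp
  qed
  show "\<forall>k. k \<noteq> 4 \<longrightarrow> \<not> has_induced_cycle V E k \<Longrightarrow> degree_perfect V E"
  proof -
    assume nc: "\<forall>k. k \<noteq> 4 \<longrightarrow> \<not> has_induced_cycle V E k"
    interpret cbg V E using finV sym irr nc by unfold_locales auto
    show "degree_perfect V E" unfolding degree_perfect_def
    proof (intro allI impI)
      fix S0 assume "S0 \<subseteq> V \<and> S0 \<noteq> {}"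
      then have S0V: "S0 \<subseteq> V" and S0ne: "S0 \<noteq> {}" by auto
      have finS0: "finite S0" using S0V finV by (rule finite_subset)
      define d where "d = min_degree E S0"
      show "min_degree E S0 \<le> biclique_number E S0"
      proof (cases "d = 0")
        case True then show ?thesis by (simp add: d_def)
      next
        case False
        have degge: "d \<le> card (nb E S0 v)" if "v \<in> S0" for v
          using that finS0 by (auto simp: d_def min_degree_def ideg_def nb_def)
        obtain x1 where x1: "x1 \<in> S0" using S0ne by auto
        have "nb E S0 x1 \<noteq> {}" using degge[OF x1] False by auto
        then have ni1: "nonisol E S0 x1" by (auto simp: nonisol_def nb_def)
        have g0: "good S0 {}" by (simp add: good_def)
        have f0: "far E S0 {} x1" by (simp add: far_def)
        obtain x where x: "x \<in> S0" "nonisol E S0 x" "nest E S0 x"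
          using mainL[OF S0V g0 x1 ni1 f0] by blast
        define Y0 where "Y0 = nb E S0 x"
        have finY0: "finite Y0" using finS0 by (simp add: Y0_def nb_def)
        have Y0ne: "Y0 \<noteq> {}" using x(2) by (auto simp: Y0_def nb_def nonisol_def)
        have Y0S: "Y0 \<subseteq> S0" by (auto simp: Y0_def nb_def)
        define m where "m = Min ((\<lambda>y. card (nb E S0 y)) ` Y0)"
        have "m \<in> (\<lambda>y. card (nb E S0 y)) ` Y0" unfolding m_def using finY0 Y0ne by (intro Min_in) auto
        then obtain ym where ym: "ym \<in> Y0" "card (nb E S0 ym) = m" by auto
        have mle: "m \<le> card (nb E S0 y)" if "y \<in> Y0" for y
          using that finY0 by (simp add: m_def)
        have finnb: "finite (nb E S0 v)" for v using finS0 by (simp add: nb_def)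
        have ymsub: "nb E S0 ym \<subseteq> nb E S0 y" if yY: "y \<in> Y0" for y
        proof -
          have "nb E S0 ym \<subseteq> nb E S0 y \<or> nb E S0 y \<subseteq> nb E S0 ym"
            using x(3) ym(1) yY by (auto simp: nest_def Y0_def)
          then show ?thesis
          proof
            assume sub: "nb E S0 y \<subseteq> nb E S0 ym"
            have "card (nb E S0 y) = card (nb E S0 ym)"
              using card_mono[OF finnb sub] mle[OF yY] ym(2) by simp
            then have "nb E S0 y = nb E S0 ym" using card_subset_eq[OF finnb sub] by simp
            then show ?thesis by simp
          qed
        qed
        have "d \<le> card (nb E S0 ym)" using degge ym(1) Y0S by auto
        then obtain A where A: "A \<subseteq> nb E S0 ym" "card A = d" "finite A"
          by (rule obtain_subset_with_card_n)
        have "d \<le> card Y0" using degge[OF x(1)] by (simp add: Y0_def)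
        then obtain B where B: "B \<subseteq> Y0" "card B = d" "finite B"
          by (rule obtain_subset_with_card_n)
        have xV: "x \<in> V" using x(1) S0V by auto
        have ymV: "ym \<in> V" and exy: "E x ym" using ym(1) Y0S S0V by (auto simp: Y0_def nb_def)
        have disj: "A \<inter> B = {}"
        proof (rule ccontr)
          assume "A \<inter> B \<noteq> {}"
          then obtain z where z: "z \<in> A" "z \<in> B" by auto
          have "z \<in> S0" "E ym z" "E x z" using z A B by (auto simp: nb_def Y0_def)
          then show False using no_tri[of x ym z] xV ymV exy S0V by auto
        qed
        have all: "\<forall>a\<in>A. \<forall>b\<in>B. E a b"
        proof (intro ballI)
          fix a b assume "a \<in> A" "b \<in> B"
          then have "a \<in> nb E S0 b" using A B ymsub by auto
          then show "E a b" using sym by (auto simp: nb_def)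
        qed
        have AS: "A \<subseteq> S0" using A by (auto simp: nb_def)
        have BS: "B \<subseteq> S0" using B Y0S by auto
        have hb: "has_biclique E S0 d" unfolding has_biclique_def
          using AS BS disj A B all by blast
        have bnd: "t \<le> card S0" if hbt: "has_biclique E S0 t" for t
        proof -
          obtain A' where "A' \<subseteq> S0" "card A' = t" using hbt by (auto simp: has_biclique_def)
          then show ?thesis using card_mono[OF finS0] by auto
        qed
        have "d \<le> biclique_number E S0"
          unfolding biclique_number_def by (rule Greatest_le_nat[of "has_biclique E S0" d "card S0", OF hb bnd])
        then show ?thesis by (simp add: d_def)
      qed
    qed
  qed
qed

end
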